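(* For each $n\ge1$, there are exactly $n$ pairwise non-isomorphic digraphs whose $H$-spectrum equals that of $\overleftrightarrow{K_n}$, namely $\overleftrightarrow{K_n}$ and $Y_{a,n-a}$ for $a=1,\dots,n-1$.
   Context: A digraph has a finite vertex set and an arc set of ordered pairs of distinct vertices; $\{x,y\}$ is a digon if both $xy,yx$ are arcs. $H(X)$ has $(u,v)$-entry $1$ if $uv$ and $vu$ are arcs, $i$ if only $uv$ is an arc, $-i$ if only $vu$ is an arc, and $0$ otherwise; the $H$-spectrum is the multiset of eigenvalues of $H(X)$. $\overleftrightarrow{K_n}$ is the complete digraph on $n$ vertices (every pair of vertices forms a digon), so $H(\overleftrightarrow{K_n})$ is the adjacency matrix of $K_n$. For $1\le a\le n-1$, $Y_{a,n-a}$ is the digraph on a vertex set $A\cup B$ with $|A|=a$, $|B|=n-a$, in which every pair inside $A$ and every pair inside $B$ forms a digon, and for every $u\in A$, $v\in B$ there is the single arc $uv$ (and not $vu$). *)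

theory Defs
  imports "Jordan_Normal_Form.Char_Poly"
begin

definition is_digraph :: "nat \<Rightarrow> (nat \<times> nat) set \<Rightarrow> bool" where
  "is_digraph n E \<longleftrightarrow> E \<subseteq> {0..<n} \<times> {0..<n} \<and> (\<forall>v. (v, v) \<notin> E)"

definition herm_adj :: "nat \<Rightarrow> (nat \<times> nat) set \<Rightarrow> complex mat" where
  "herm_adj n E = mat n n (\<lambda>(u, v).
      if (u, v) \<in> E \<and> (v, u) \<in> E then 1
      else if (u, v) \<in> E then \<i>
      else if (v, u) \<in> E then - \<i>
      else 0)"

definition H_spectrum :: "nat \<Rightarrow> (nat \<times> nat) set \<Rightarrow> complex multiset" where
  "H_spectrum n E = proots (char_poly (herm_adj n E))"

definition digraph_iso :: "nat \<Rightarrow> (nat \<times> nat) set \<Rightarrow> (nat \<times> nat) set \<Rightarrow> bool" where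
  "digraph_iso n E F \<longleftrightarrow>
     (\<exists>f. bij_betw f {0..<n} {0..<n} \<and>
          (\<forall>u\<in>{0..<n}. \<forall>v\<in>{0..<n}. (u, v) \<in> E \<longleftrightarrow> (f u, f v) \<in> F))"

definition complete_digraph :: "nat \<Rightarrow> (nat \<times> nat) set" where
  "complete_digraph n = {(u, v). u < n \<and> v < n \<and> u \<noteq> v}"

text \<open>Y_{a,n-a}: A = {0..<a}, B = {a..<n}; digons inside A and inside B,
  single arcs from A to B.\<close>
definition Y_digraph :: "nat \<Rightarrow> nat \<Rightarrow> (nat \<times> nat) set" where
  "Y_digraph a n = {(u, v). u < n \<and> v < n \<and> u \<noteq> v \<and>
      ((u < a \<and> v < a) \<or> (a \<le> u \<and> a \<le> v) \<or> (u < a \<and> a \<le> v))}"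

end

theory Submission
  imports Defs "Jordan_Normal_Form.Schur_Decomposition"
begin


definition trm :: "'a::comm_ring_1 mat \<Rightarrow> 'a" where
  "trm A = (\<Sum>i\<in>{0..<dim_row A}. A $$ (i,i))"

lemma trm_comm:
  assumes A: "A \<in> carrier_mat n m" and B: "B \<in> carrier_mat m n"
  shows "trm (A * B) = trm (B * A)"
proof -
  have "trm (A * B) = (\<Sum>i\<in>{0..<n}. \<Sum>k\<in>{0..<m}. A $$ (i,k) * B $$ (k,i))"
    using A B by (auto simp: trm_def scalar_prod_def intro!: sum.cong)
  also have "\<dots> = (\<Sum>k\<in>{0..<m}. \<Sum>i\<in>{0..<n}. B $$ (k,i) * A $$ (i,k))"
    by (subst sum.swap) (simp add: mult.commute)
  also have "\<dots> = trm (B * A)"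
    using A B by (auto simp: trm_def scalar_prod_def intro!: sum.cong)
  finally show ?thesis .
qed

lemma size_proots_lin: "size (proots (\<Prod>a\<leftarrow>as. [:-a,1::complex:])) = length as"
proof (induction as)
  case (Cons a as)
  have "(\<Prod>a\<leftarrow>as. [:-a,1::complex:]) \<noteq> 0" by (auto simp: prod_list_zero_iff)
  moreover have "[:-a,1::complex:] \<noteq> 0" by simp
  ultimately have "proots (\<Prod>a\<leftarrow>a#as. [:-a,1::complex:]) = proots [:-a,1:] + proots (\<Prod>a\<leftarrow>as. [:-a,1::complex:])"
    by (simp only: prod_list.Cons list.map) (rule proots_mult)
  moreover have "size (proots [:-a,1::complex:]) = 1" using proots_linear_factor[of "-a"] by simp
  ultimately show ?case using Cons by (simp del: proots_linear_factor)
qed simp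

lemma size_spec: "(A::complex mat) \<in> carrier_mat n n \<Longrightarrow> size (proots (char_poly A)) = n"
  using char_poly_factorized[of A n] size_proots_lin by metis

lemma herm_quad:
  fixes G :: "complex mat" and r :: complex
  assumes G: "G \<in> carrier_mat n n"
    and herm: "\<And>i j. i < n \<Longrightarrow> j < n \<Longrightarrow> G $$ (j,i) = cnj (G $$ (i,j))"
    and rr: "cnj r = r"
    and roots: "\<And>\<mu>. poly (char_poly G) \<mu> = 0 \<Longrightarrow> \<mu> = 0 \<or> \<mu> = r"
  shows "G * G = r \<cdot>\<^sub>m G"
proof -
  obtain es where ces: "char_poly G = (\<Prod>a\<leftarrow>es. [:-a,1:])"
    using char_poly_factorized[OF G] by blast
  obtain B P Q where sd: "schur_decomposition G es = (B,P,Q)"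
    by (cases "schur_decomposition G es") auto
  from schur_decomposition[OF G ces sd] have sim: "similar_mat_wit G B P Q"
    and ut: "upper_triangular B" and dg: "diag_mat B = es" by auto
  note w = similar_mat_witD2[OF G sim]
  have Bc: "B \<in> carrier_mat n n" and Pc: "P \<in> carrier_mat n n" and Qc: "Q \<in> carrier_mat n n"
    using w by auto
  have PQ: "P*Q = 1\<^sub>m n" and QP: "Q*P = 1\<^sub>m n" and GPBQ: "G = P*B*Q" using w by auto
  have bd: "B $$ (i,i) = 0 \<or> B $$ (i,i) = r" if "i < n" for i
  proof -
    have "B $$ (i,i) \<in> set es" using that Bc unfolding dg[symmetric] diag_mat_def by auto
    hence "poly (char_poly G) (B $$ (i,i)) = 0" unfolding ces poly_prod_list
      by (auto simp: prod_list_zero_iff)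
    thus ?thesis by (rule roots)
  qed
  have btri: "B $$ (i,j) = 0" if "j < i" "i < n" for i j
    using ut Bc that by auto
  define N where "N = B * B - r \<cdot>\<^sub>m B"
  have Nc: "N \<in> carrier_mat n n" using Bc by (auto simp: N_def)
  have Nz: "N $$ (i,j) = 0" if "j \<le> i" "i < n" for i j
  proof -
    have jn: "j < n" using that by simp
    have "(B*B) $$ (i,j) = (\<Sum>k\<in>{0..<n}. B $$ (i,k) * B $$ (k,j))"
      using Bc that jn by (auto simp: scalar_prod_def intro!: sum.cong)
    also have "\<dots> = (\<Sum>k\<in>{0..<n}. if k = i then (if j = i then B$$(i,i) * B$$(i,i) else 0) else 0)"
    proof (rule sum.cong[OF refl])
      fix k assume k: "k \<in> {0..<n}"
      show "B $$ (i,k) * B $$ (k,j) = (if k = i then (if j = i then B$$(i,i) * B$$(i,i) else 0) else 0)"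
        using btri[of k i] btri[of j k] btri[of j i] that k by (cases "k < i"; cases "k = i"; auto)
    qed
    also have "\<dots> = (if j = i then B$$(i,i) * B$$(i,i) else 0)" using that by simp
    finally have BB: "(B*B) $$ (i,j) = (if j = i then B$$(i,i) * B$$(i,i) else 0)" .
    show ?thesis using that jn Bc bd[of i] btri[of j i] by (auto simp: N_def BB)
  qed
  have NN: "(N*N) $$ (i,i) = 0" if "i < n" for i
  proof -
    have "(N*N) $$ (i,i) = (\<Sum>k\<in>{0..<n}. N $$ (i,k) * N $$ (k,i))"
      using Nc that by (auto simp: scalar_prod_def intro!: sum.cong)
    also have "\<dots> = 0"
    proof (rule sum.neutral, rule ballI)
      fix k assume k: "k \<in> {0..<n}"
      show "N $$ (i,k) * N $$ (k,i) = 0"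
        using Nz[of k i] Nz[of i k] that k by (cases "k \<le> i") auto
    qed
    finally show ?thesis .
  qed
  have trNN: "trm (N*N) = 0" using Nc NN by (auto simp: trm_def intro!: sum.neutral)
  define M where "M = G*G - r \<cdot>\<^sub>m G"
  have Mc: "M \<in> carrier_mat n n" using G by (auto simp: M_def)
  have cancel: "Q * (P * X) = X" if "X \<in> carrier_mat n k" for X k
  proof -
    have "Q * (P * X) = (Q * P) * X" using Qc Pc that by simp
    also have "\<dots> = X" using QP that by simp
    finally show ?thesis .
  qed
  have GG: "G * G = P * (B * B) * Q"
  proof -
    have "P * B * Q * (P * B * Q) = P * (B * (Q * (P * (B * Q))))"
      using Pc Bc Qc by (simp add: assoc_mult_mat[of _ n n _ n _ n])
    also have "\<dots> = P * (B * (B * Q))" using Bc Qc by (simp add: cancel[of _ n])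
    also have "\<dots> = P * (B * B) * Q" using Pc Bc Qc by (simp add: assoc_mult_mat[of _ n n _ n _ n])
    finally show ?thesis unfolding GPBQ .
  qed
  have rG: "r \<cdot>\<^sub>m G = P * (r \<cdot>\<^sub>m B) * Q"
    unfolding GPBQ using Pc Bc Qc by (simp add: mult_smult_assoc_mat[of _ n n _ n] mult_smult_distrib[of _ n n _ n] assoc_mult_mat[of _ n n _ n _ n])
  have MPNQ: "M = P * N * Q"
  proof -
    have NQ: "N * Q = B * B * Q - (r \<cdot>\<^sub>m B) * Q"
      unfolding N_def by (rule minus_mult_distrib_mat) (use Bc Qc in auto)
    have "P * N * Q = P * (N * Q)" by (rule assoc_mult_mat[OF Pc Nc Qc])
    also have "\<dots> = P * (B * B * Q - (r \<cdot>\<^sub>m B) * Q)" unfolding NQ ..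
    finally have "P * N * Q = P * (B * B * Q - (r \<cdot>\<^sub>m B) * Q)" .
    also have "\<dots> = P * (B * B * Q) - P * ((r \<cdot>\<^sub>m B) * Q)"
      using Pc Bc Qc by (intro mult_minus_distrib_mat[of _ n n]) auto
    also have "\<dots> = G * G - r \<cdot>\<^sub>m G" unfolding GG rG using Pc Bc Qc by (simp add: assoc_mult_mat[of _ n n _ n _ n])
    finally show ?thesis unfolding M_def by simp
  qed
  have MM: "M * M = P * ((N * N) * Q)"
  proof -
    have "P * N * Q * (P * N * Q) = P * (N * (Q * (P * (N * Q))))"
      using Pc Nc Qc by (simp add: assoc_mult_mat[of _ n n _ n _ n])
    also have "\<dots> = P * (N * (N * Q))" using Nc Qc by (simp add: cancel[of _ n])
    also have "\<dots> = P * ((N * N) * Q)" using Pc Nc Qc by (simp add: assoc_mult_mat[of _ n n _ n _ n])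
    finally show ?thesis unfolding MPNQ .
  qed
  have "trm (M * M) = trm (((N * N) * Q) * P)"
    unfolding MM using Pc Nc Qc by (intro trm_comm[of _ n n]) auto
  also have "\<dots> = trm ((N * N) * (Q * P))"
    by (subst assoc_mult_mat[of _ n n _ n _ n]) (use Pc Nc Qc in auto)
  also have "\<dots> = 0" using QP Nc trNN by simp
  finally have trMM: "trm (M * M) = 0" .
  have GGe: "(G*G) $$ (i,k) = (\<Sum>j\<in>{0..<n}. G $$ (i,j) * G $$ (j,k))" if "i < n" "k < n" for i k
    using G that by (auto simp: scalar_prod_def intro!: sum.cong)
  have Mh: "M $$ (k,i) = cnj (M $$ (i,k))" if "i < n" "k < n" for i k
  proof -
    have "M $$ (k,i) = (G*G) $$ (k,i) - r * G $$ (k,i)"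
      using G that by (simp add: M_def)
    also have "(G*G) $$ (k,i) = (\<Sum>j\<in>{0..<n}. G $$ (k,j) * G $$ (j,i))" using GGe that by simp
    also have "\<dots> = (\<Sum>j\<in>{0..<n}. cnj (G $$ (i,j) * G $$ (j,k)))"
    proof (rule sum.cong[OF refl])
      fix j assume "j \<in> {0..<n}"
      then have "G $$ (k,j) = cnj (G $$ (j,k))" "G $$ (j,i) = cnj (G $$ (i,j))"
        using herm[of j k] herm[of i j] that by auto
      then show "G $$ (k,j) * G $$ (j,i) = cnj (G $$ (i,j) * G $$ (j,k))"
        by (simp only: complex_cnj_mult mult.commute)
    qed
    also have "\<dots> = cnj ((G*G) $$ (i,k))" using GGe that by simp
    also have "r * G $$ (k,i) = cnj (r * G $$ (i,k))" using herm[of i k] that rr by simp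
    also have "cnj ((G*G) $$ (i,k)) - cnj (r * G $$ (i,k)) = cnj (M $$ (i,k))"
      using G that by (simp add: M_def)
    finally show ?thesis .
  qed
  have "trm (M * M) = (\<Sum>i\<in>{0..<n}. \<Sum>k\<in>{0..<n}. M $$ (i,k) * M $$ (k,i))"
    using Mc by (auto simp: trm_def scalar_prod_def intro!: sum.cong)
  also have "\<dots> = (\<Sum>i\<in>{0..<n}. \<Sum>k\<in>{0..<n}. complex_of_real ((cmod (M $$ (i,k)))\<^sup>2))"
  proof (intro sum.cong[OF refl])
    fix i k assume "i \<in> {0..<n}" "k \<in> {0..<n}"
    then have "M $$ (k,i) = cnj (M $$ (i,k))" using Mh[of i k] by auto
    then show "M $$ (i,k) * M $$ (k,i) = complex_of_real ((cmod (M $$ (i,k)))\<^sup>2)"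
      by (simp only: complex_norm_square)
  qed
  also have "\<dots> = complex_of_real (\<Sum>i\<in>{0..<n}. \<Sum>k\<in>{0..<n}. (cmod (M $$ (i,k)))\<^sup>2)"
    by simp
  finally have "complex_of_real (\<Sum>i\<in>{0..<n}. \<Sum>k\<in>{0..<n}. (cmod (M $$ (i,k)))\<^sup>2) = 0"
    using trMM by (simp only:)
  hence "(\<Sum>i\<in>{0..<n}. \<Sum>k\<in>{0..<n}. (cmod (M $$ (i,k)))\<^sup>2) = 0"
    by (simp only: of_real_eq_0_iff)
  hence "\<forall>i\<in>{0..<n}. (\<Sum>k\<in>{0..<n}. (cmod (M $$ (i,k)))\<^sup>2) = 0"
    by (subst (asm) sum_nonneg_eq_0_iff) (auto intro: sum_nonneg)
  hence M0: "M $$ (i,k) = 0" if "i < n" "k < n" for i k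
    using that by (auto simp: sum_nonneg_eq_0_iff)
  show ?thesis
  proof (rule eq_matI)
    fix i j assume ij: "i < dim_row (r \<cdot>\<^sub>m G)" "j < dim_col (r \<cdot>\<^sub>m G)"
    then have "M $$ (i,j) = 0" using M0 G by auto
    then show "(G * G) $$ (i,j) = (r \<cdot>\<^sub>m G) $$ (i,j)" using ij G by (auto simp: M_def)
  qed (use G in auto)
qed



lemma cmod_vals: "z \<in> {0,1,\<i>,-\<i>} \<Longrightarrow> (cmod z)\<^sup>2 \<le> 1"
  by auto

lemma struct1:
  fixes g :: "nat \<Rightarrow> nat \<Rightarrow> complex"
  assumes vals: "\<And>i j. i<n \<Longrightarrow> j<n \<Longrightarrow> g i j \<in> {0,1,\<i>,-\<i>}"
    and herm: "\<And>i j. i<n \<Longrightarrow> j<n \<Longrightarrow> g j i = cnj (g i j)"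
    and sq: "\<And>i k. i<n \<Longrightarrow> k<n \<Longrightarrow> (\<Sum>j\<in>{0..<n}. g i j * g j k) = of_nat n * g i k"
    and diag: "\<And>i. i<n \<Longrightarrow> g i i = 1"
  shows struct1_mod: "\<And>i j. i<n \<Longrightarrow> j<n \<Longrightarrow> cmod (g i j) = 1"
    and struct1_fac: "\<And>i j. i<n \<Longrightarrow> j<n \<Longrightarrow> g i j = g i 0 * g 0 j"
proof -
  have md: "cmod (g i j) = 1" if ij: "i<n" "j<n" for i j
  proof -
    have "complex_of_real (\<Sum>j\<in>{0..<n}. (cmod (g i j))\<^sup>2) = (\<Sum>j\<in>{0..<n}. g i j * g j i)"
    proof -
      have "complex_of_real (\<Sum>j\<in>{0..<n}. (cmod (g i j))\<^sup>2) = (\<Sum>j\<in>{0..<n}. complex_of_real ((cmod (g i j))\<^sup>2))"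
        by simp
      also have "\<dots> = (\<Sum>j\<in>{0..<n}. g i j * g j i)"
      proof (rule sum.cong[OF refl])
        fix j assume "j \<in> {0..<n}"
        then have "g j i = cnj (g i j)" using herm[of i j] ij by auto
        then show "complex_of_real ((cmod (g i j))\<^sup>2) = g i j * g j i"
          by (simp only: complex_norm_square)
      qed
      finally show ?thesis .
    qed
    also have "\<dots> = of_nat n" using sq[of i i] diag[of i] ij by simp
    finally have S: "(\<Sum>j\<in>{0..<n}. (cmod (g i j))\<^sup>2) = real n"
      by (metis of_real_eq_iff of_real_of_nat_eq)
    have "(\<Sum>j\<in>{0..<n}. 1 - (cmod (g i j))\<^sup>2) = 0"
      by (simp add: sum_subtractf S)
    moreover have "\<forall>j\<in>{0..<n}. 0 \<le> 1 - (cmod (g i j))\<^sup>2"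
      using vals[of i] ij cmod_vals by auto
    ultimately have "\<forall>j\<in>{0..<n}. 1 - (cmod (g i j))\<^sup>2 = 0"
      using sum_nonneg_eq_0_iff[of "{0..<n}" "\<lambda>j. 1 - (cmod (g i j))\<^sup>2"] by blast
    hence "(cmod (g i j))\<^sup>2 = 1" using ij by auto
    thus ?thesis using norm_ge_zero[of "g i j"] by (auto simp add: power2_eq_1_iff)
  qed
  show "cmod (g i j) = 1" if "i<n" "j<n" for i j using md that .
  have uc: "z * cnj z = 1" if "cmod z = 1" for z
    using complex_norm_square[of z] that by simp
  show "g i j = g i 0 * g 0 j" if ij: "i<n" "j<n" for i j
  proof -
    have n0: "0 < n" using ij by simp
    define a where "a = (\<lambda>j. g i j)"
    define b where "b = (\<lambda>j. g i 0 * g 0 j)"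
    have aa: "a j * cnj (a j) = 1" if "j < n" for j using uc md that ij by (simp add: a_def)
    have bb: "b j * cnj (b j) = 1" if "j < n" for j
    proof -
      have "b j * cnj (b j) = (g i 0 * cnj (g i 0)) * (g 0 j * cnj (g 0 j))"
        by (simp add: b_def ac_simps)
      also have "\<dots> = 1" using uc md n0 that ij by simp
      finally show ?thesis .
    qed
    have trm1: "(a j - b j) * cnj (a j - b j) = 2 - a j * cnj (b j) - cnj (a j * cnj (b j))"
      if "j < n" for j
    proof -
      have "(a j - b j) * cnj (a j - b j) = a j * cnj (a j) + b j * cnj (b j) - a j * cnj (b j) - cnj (a j) * b j"
        by (simp add: algebra_simps)
      then show ?thesis using aa[OF that] bb[OF that] by (simp add: mult.commute)
    qed
    have S1: "(\<Sum>j\<in>{0..<n}. a j * cnj (b j)) = of_nat n"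
    proof -
      have "(\<Sum>j\<in>{0..<n}. a j * cnj (b j)) = (\<Sum>j\<in>{0..<n}. cnj (g i 0) * (g i j * g j 0))"
      proof (rule sum.cong[OF refl])
        fix j assume "j \<in> {0..<n}"
        then have "cnj (g 0 j) = g j 0" using herm[of j 0] n0 by simp
        then show "a j * cnj (b j) = cnj (g i 0) * (g i j * g j 0)"
          by (simp add: a_def b_def)
      qed
      also have "\<dots> = cnj (g i 0) * (of_nat n * g i 0)"
        by (simp add: sum_distrib_left[symmetric] sq ij n0)
      also have "\<dots> = of_nat n * (g i 0 * cnj (g i 0))" by (simp add: ac_simps)
      also have "\<dots> = of_nat n" using uc md ij n0 by simp
      finally show ?thesis .
    qed
    have "complex_of_real (\<Sum>j\<in>{0..<n}. (cmod (a j - b j))\<^sup>2) = (\<Sum>j\<in>{0..<n}. complex_of_real ((cmod (a j - b j))\<^sup>2))"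
      by simp
    also have "\<dots> = (\<Sum>j\<in>{0..<n}. (a j - b j) * cnj (a j - b j))"
      by (rule sum.cong[OF refl]) (simp only: complex_norm_square)
    also have "\<dots> = (\<Sum>j\<in>{0..<n}. 2 - a j * cnj (b j) - cnj (a j * cnj (b j)))"
      by (rule sum.cong[OF refl]) (use trm1 in auto)
    also have "\<dots> = 2 * of_nat n - (\<Sum>j\<in>{0..<n}. a j * cnj (b j)) - cnj (\<Sum>j\<in>{0..<n}. a j * cnj (b j))"
      by (simp add: sum_subtractf)
    also have "\<dots> = 0" unfolding S1 by simp
    finally have "(\<Sum>j\<in>{0..<n}. (cmod (a j - b j))\<^sup>2) = 0"
      by (simp only: of_real_eq_0_iff)
    hence "\<forall>j\<in>{0..<n}. (cmod (a j - b j))\<^sup>2 = 0"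
      by (simp add: sum_nonneg_eq_0_iff)
    hence "cmod (a j - b j) = 0" using ij by auto
    thus ?thesis by (simp add: a_def b_def)
  qed
qed



lemma ha_carrier[simp]: "herm_adj n E \<in> carrier_mat n n"
  by (simp add: herm_adj_def)

lemma ha_dims[simp]: "dim_row (herm_adj n E) = n" "dim_col (herm_adj n E) = n"
  by (simp_all add: herm_adj_def)

lemma ha_idx: "i<n \<Longrightarrow> j<n \<Longrightarrow> herm_adj n E $$ (i,j) =
   (if (i, j) \<in> E \<and> (j, i) \<in> E then 1 else if (i, j) \<in> E then \<i>
      else if (j, i) \<in> E then - \<i> else 0)"
  by (simp add: herm_adj_def)

lemma K_idx: "i<n \<Longrightarrow> j<n \<Longrightarrow> herm_adj n (complete_digraph n) $$ (i,j) = (if i = j then 0 else 1)"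
  by (simp add: ha_idx complete_digraph_def)

lemma K_roots:
  assumes "poly (char_poly (herm_adj n (complete_digraph n))) lam = 0"
  shows "lam = of_nat n - 1 \<or> lam = -1"
proof -
  let ?H = "herm_adj n (complete_digraph n)"
  have "eigenvalue ?H lam" using assms eigenvalue_root_char_poly[OF ha_carrier] by blast
  then obtain v where v: "v \<in> carrier_vec n" "v \<noteq> 0\<^sub>v n" "?H *\<^sub>v v = lam \<cdot>\<^sub>v v"
    unfolding eigenvalue_def eigenvector_def by auto
  have dv: "dim_vec v = n" using v by auto
  define S where "S = (\<Sum>j\<in>{0..<n}. v $ j)"
  have e: "S - v $ i = lam * v $ i" if i: "i < n" for i
  proof -
    have "(?H *\<^sub>v v) $ i = (\<Sum>j\<in>{0..<n}. (if i = j then 0 else 1) * v $ j)"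
      using i dv by (auto simp: scalar_prod_def K_idx intro!: sum.cong)
    also have "\<dots> = (\<Sum>j\<in>{0..<n}. (if j = i then 0 else v $ j))"
      by (rule sum.cong) auto
    also have "\<dots> = S - v $ i"
    proof -
      have "S = (\<Sum>j\<in>{0..<n}. (if j = i then 0 else v $ j) + (if j = i then v $ j else 0))"
        unfolding S_def by (rule sum.cong) auto
      also have "\<dots> = (\<Sum>j\<in>{0..<n}. (if j = i then 0 else v $ j)) + v $ i"
        using i by (simp add: sum.distrib)
      finally show ?thesis by simp
    qed
    finally show ?thesis using v(3) i dv by (metis index_smult_vec(1))
  qed
  have "(\<Sum>i\<in>{0..<n}. S - v $ i) = (\<Sum>i\<in>{0..<n}. lam * v $ i)"
    using e by (intro sum.cong) auto
  hence "of_nat n * S - S = lam * S" by (simp add: sum_subtractf sum_distrib_left S_def)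
  hence eq: "(of_nat n - 1 - lam) * S = 0" by (simp add: algebra_simps)
  show ?thesis
  proof (cases "S = 0")
    case True
    have "\<exists>i<n. v $ i \<noteq> 0"
    proof (rule ccontr)
      assume "\<not> (\<exists>i<n. v $ i \<noteq> 0)"
      hence "v = 0\<^sub>v n" using dv by (intro eq_vecI) auto
      thus False using v(2) by simp
    qed
    then obtain i where i: "i < n" "v $ i \<noteq> 0" by blast
    have "(lam + 1) * v $ i = 0" using e[OF i(1)] True
      by (metis add.commute add_eq_0_iff2 diff_0 distrib_right mult_1)
    hence "lam + 1 = 0" using i(2) by simp
    hence "lam = -1" by (simp only: eq_neg_iff_add_eq_0)
    thus ?thesis by simp
  next
    case False
    thus ?thesis using eq by simp
  qed
qed

lemma shift_root:
  assumes "poly (char_poly (herm_adj n E + 1\<^sub>m n)) \<mu> = 0"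
  shows "poly (char_poly (herm_adj n E)) (\<mu> - 1) = 0"
proof -
  let ?H = "herm_adj n E"
  have Gc: "?H + 1\<^sub>m n \<in> carrier_mat n n" by simp
  have "eigenvalue (?H + 1\<^sub>m n) \<mu>" using assms eigenvalue_root_char_poly[OF Gc] by blast
  then obtain v where v: "v \<in> carrier_vec n" "v \<noteq> 0\<^sub>v n" "(?H + 1\<^sub>m n) *\<^sub>v v = \<mu> \<cdot>\<^sub>v v"
    unfolding eigenvalue_def eigenvector_def by auto
  have "(?H + 1\<^sub>m n) *\<^sub>v v = ?H *\<^sub>v v + v"
    using v(1) by (simp add: add_mult_distrib_mat_vec[of _ n n])
  hence eq: "?H *\<^sub>v v + v = \<mu> \<cdot>\<^sub>v v" using v(3) by simp
  have "?H *\<^sub>v v = (\<mu> - 1) \<cdot>\<^sub>v v"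
  proof (rule eq_vecI)
    fix i assume i: "i < dim_vec ((\<mu> - 1) \<cdot>\<^sub>v v)"
    hence "(?H *\<^sub>v v + v) $ i = (\<mu> \<cdot>\<^sub>v v) $ i" using eq by simp
    thus "(?H *\<^sub>v v) $ i = ((\<mu> - 1) \<cdot>\<^sub>v v) $ i" using i v(1)
      by (simp add: algebra_simps)
  qed (use v(1) in simp)
  hence "eigenvalue ?H (\<mu> - 1)" using v unfolding eigenvalue_def eigenvector_def by auto
  thus ?thesis using eigenvalue_root_char_poly[OF ha_carrier] by blast
qed



lemma Y0: "Y_digraph 0 n = complete_digraph n"
  by (auto simp: Y_digraph_def complete_digraph_def)

lemma Y_mem: "x<n \<Longrightarrow> y<n \<Longrightarrow> (x,y) \<in> Y_digraph a n \<longleftrightarrow> x \<noteq> y \<and> \<not>(a \<le> x \<and> y < a)"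
  by (auto simp: Y_digraph_def)

lemma iso_from_set:
  assumes dg: "is_digraph n E" and A: "A \<subseteq> {0..<n}"
    and ch: "\<And>u w. u<n \<Longrightarrow> w<n \<Longrightarrow> u \<noteq> w \<Longrightarrow> (u,w) \<in> E \<longleftrightarrow> \<not>(u \<notin> A \<and> w \<in> A)"
  shows "digraph_iso n E (Y_digraph (card A) n)"
proof -
  define a where "a = card A"
  have fA: "finite A" using A finite_subset by blast
  have an: "a \<le> n" unfolding a_def using card_mono[OF _ A] by simp
  obtain g where g: "bij_betw g A {0..<a}"
    using bij_betw_iff_card[OF fA, of "{0..<a}"] by (auto simp: a_def)
  have "card ({0..<n} - A) = n - a" unfolding a_def using A fA by (simp add: card_Diff_subset)
  then obtain h where h: "bij_betw h ({0..<n} - A) {a..<n}"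
    using bij_betw_iff_card[of "{0..<n} - A" "{a..<n}"] by auto
  define f where "f x = (if x \<in> A then g x else h x)" for x
  have f1: "bij_betw f A {0..<a}" using g by (rule bij_betw_cong[THEN iffD1, rotated]) (simp add: f_def)
  have f2: "bij_betw f ({0..<n} - A) {a..<n}" using h by (rule bij_betw_cong[THEN iffD1, rotated]) (simp add: f_def)
  have fb0: "bij_betw f (A \<union> ({0..<n} - A)) ({0..<a} \<union> {a..<n})"
    by (rule bij_betw_combine[OF f1 f2]) auto
  have "A \<union> ({0..<n} - A) = {0..<n}" using A by auto
  moreover have "{0..<a} \<union> {a..<n} = {0..<n}" using an by auto
  ultimately have fb: "bij_betw f {0..<n} {0..<n}" using fb0 by simp
  have fa: "f u < a \<longleftrightarrow> u \<in> A" if "u < n" for u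
  proof
    assume "u \<in> A" thus "f u < a" using f1 by (auto simp: bij_betw_def)
  next
    assume "f u < a"
    show "u \<in> A"
    proof (rule ccontr)
      assume "u \<notin> A"
      hence "f u \<in> {a..<n}" using f2 that by (auto simp: bij_betw_def)
      thus False using \<open>f u < a\<close> by simp
    qed
  qed
  have fn: "f u < n" if "u < n" for u using fb that by (auto simp: bij_betw_def)
  have finj: "f u \<noteq> f w" if "u < n" "w < n" "u \<noteq> w" for u w
    using fb that by (auto simp: bij_betw_def inj_on_def)
  have irr: "(u,u) \<notin> E" for u using dg by (simp add: is_digraph_def)
  show ?thesis unfolding digraph_iso_def a_def[symmetric]
  proof (intro exI[of _ f] conjI fb ballI)
    fix u w assume u: "u \<in> {0..<n}" and w: "w \<in> {0..<n}"
    show "(u, w) \<in> E \<longleftrightarrow> (f u, f w) \<in> Y_digraph a n"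
    proof (cases "u = w")
      case True thus ?thesis using irr Y_mem[of "f u" n "f u" a] fn u by simp
    next
      case False
      thus ?thesis using ch[of u w] Y_mem[of "f u" n "f w" a] fn u w finj[of u w] fa[of u] fa[of w]
        by auto
    qed
  qed
qed

lemma spec_of_iso:
  assumes dg: "is_digraph n E" and iso: "digraph_iso n E (Y_digraph a n)"
  shows "H_spectrum n E = H_spectrum n (complete_digraph n)"
proof -
  obtain f where fb: "bij_betw f {0..<n} {0..<n}"
    and fe: "\<And>u w. u<n \<Longrightarrow> w<n \<Longrightarrow> (u,w) \<in> E \<longleftrightarrow> (f u, f w) \<in> Y_digraph a n"
    using iso unfolding digraph_iso_def by auto
  have fn: "f u < n" if "u < n" for u using fb that by (auto simp: bij_betw_def)
  have finj: "f u \<noteq> f w" if "u < n" "w < n" "u \<noteq> w" for u w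
    using fb that by (auto simp: bij_betw_def inj_on_def)
  have irr: "(u,u) \<notin> E" for u using dg by (simp add: is_digraph_def)
  define v where "v u = (if f u < a then \<i> else 1)" for u
  have vv: "v u * cnj (v u) = 1" for u by (simp add: v_def)
  let ?H = "herm_adj n E" and ?K = "herm_adj n (complete_digraph n)"
  have entry: "?H $$ (i,j) = v i * ?K $$ (i,j) * cnj (v j)" if ij: "i < n" "j < n" for i j
  proof (cases "i = j")
    case True thus ?thesis using ij irr by (simp add: ha_idx complete_digraph_def)
  next
    case False
    have e1: "(i,j) \<in> E \<longleftrightarrow> \<not>(a \<le> f i \<and> f j < a)"
      using fe[of i j] Y_mem[of "f i" n "f j" a] ij fn finj[of i j] False by auto
    have e2: "(j,i) \<in> E \<longleftrightarrow> \<not>(a \<le> f j \<and> f i < a)"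
      using fe[of j i] Y_mem[of "f j" n "f i" a] ij fn finj[of i j] False by auto
    show ?thesis using ij False e1 e2 by (auto simp: ha_idx complete_digraph_def v_def)
  qed
  define P where "P = mat n n (\<lambda>(i,j). if i = j then v i else 0)"
  define Q where "Q = mat n n (\<lambda>(i,j). if i = j then cnj (v i) else 0)"
  have Pc: "P \<in> carrier_mat n n" and Qc: "Q \<in> carrier_mat n n" by (auto simp: P_def Q_def)
  have PQ: "P * Q = 1\<^sub>m n"
  proof (rule eq_matI)
    fix i j assume ij: "i < dim_row (1\<^sub>m n)" "j < dim_col (1\<^sub>m n)"
    have "(P * Q) $$ (i,j) = (\<Sum>k\<in>{0..<n}. (if i = k then v i else 0) * (if k = j then cnj (v k) else 0))"
      using ij by (auto simp: P_def Q_def scalar_prod_def intro!: sum.cong)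
    also have "\<dots> = (\<Sum>k\<in>{0..<n}. if k = i then (if i = j then v i * cnj (v i) else 0) else 0)"
      by (rule sum.cong) auto
    also have "\<dots> = 1\<^sub>m n $$ (i,j)" using ij vv by simp
    finally show "(P * Q) $$ (i,j) = 1\<^sub>m n $$ (i,j)" .
  qed (auto simp: P_def Q_def)
  have QP: "Q * P = 1\<^sub>m n"
  proof (rule eq_matI)
    fix i j assume ij: "i < dim_row (1\<^sub>m n)" "j < dim_col (1\<^sub>m n)"
    have "(Q * P) $$ (i,j) = (\<Sum>k\<in>{0..<n}. (if i = k then cnj (v i) else 0) * (if k = j then v k else 0))"
      using ij by (auto simp: P_def Q_def scalar_prod_def intro!: sum.cong)
    also have "\<dots> = (\<Sum>k\<in>{0..<n}. if k = i then (if i = j then v i * cnj (v i) else 0) else 0)"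
      by (rule sum.cong) (auto simp: mult.commute)
    also have "\<dots> = 1\<^sub>m n $$ (i,j)" using ij vv by simp
    finally show "(Q * P) $$ (i,j) = 1\<^sub>m n $$ (i,j)" .
  qed (auto simp: P_def Q_def)
  have PK: "(P * ?K) $$ (i,k) = v i * ?K $$ (i,k)" if "i < n" "k < n" for i k
  proof -
    have "(P * ?K) $$ (i,k) = (\<Sum>j\<in>{0..<n}. (if i = j then v i else 0) * ?K $$ (j,k))"
      using that by (auto simp: P_def scalar_prod_def intro!: sum.cong)
    also have "\<dots> = (\<Sum>j\<in>{0..<n}. if j = i then v i * ?K $$ (i,k) else 0)"
      by (rule sum.cong) auto
    also have "\<dots> = v i * ?K $$ (i,k)" using that by simp
    finally show ?thesis .
  qed
  have HPKQ: "?H = P * ?K * Q"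
  proof (rule eq_matI)
    fix i j assume ij: "i < dim_row (P * ?K * Q)" "j < dim_col (P * ?K * Q)"
    hence ij': "i < n" "j < n" by (auto simp: P_def Q_def)
    have "(P * ?K * Q) $$ (i,j) = (\<Sum>k\<in>{0..<n}. (P * ?K) $$ (i,k) * (if k = j then cnj (v k) else 0))"
      using ij' by (auto simp: P_def Q_def scalar_prod_def intro!: sum.cong)
    also have "\<dots> = (\<Sum>k\<in>{0..<n}. if k = j then v i * ?K $$ (i,j) * cnj (v j) else 0)"
      by (rule sum.cong) (auto simp: PK ij')
    also have "\<dots> = ?H $$ (i,j)" using ij' entry by simp
    finally show "?H $$ (i,j) = (P * ?K * Q) $$ (i,j)" by simp
  qed (auto simp: P_def Q_def)
  have "similar_mat ?H ?K"
    by (rule similar_matI[of _ _ P Q n]) (use Pc Qc PQ QP HPKQ in auto)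
  thus ?thesis unfolding H_spectrum_def by (simp add: char_poly_similar)
qed

lemma notiso_YK:
  assumes "1 \<le> a" "a \<le> n - 1"
  shows "\<not> digraph_iso n (Y_digraph a n) (complete_digraph n)"
proof
  assume "digraph_iso n (Y_digraph a n) (complete_digraph n)"
  then obtain f where fb: "bij_betw f {0..<n} {0..<n}"
    and fe: "\<And>u w. u<n \<Longrightarrow> w<n \<Longrightarrow> (u,w) \<in> Y_digraph a n \<longleftrightarrow> (f u, f w) \<in> complete_digraph n"
    unfolding digraph_iso_def by auto
  have an: "a < n" "0 < n" using assms by auto
  have inj: "inj_on f {0..<n}" using fb by (simp add: bij_betw_def)
  have "a \<noteq> 0" using assms by simp
  hence "f a \<noteq> f 0" using inj_onD[OF inj, of a 0] an by auto
  moreover have "f a < n" "f 0 < n" using fb an by (auto simp: bij_betw_def)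
  ultimately have "(f a, f 0) \<in> complete_digraph n" by (simp add: complete_digraph_def)
  hence "(a, 0) \<in> Y_digraph a n" using fe[of a 0] an by simp
  thus False using Y_mem[of a n 0 a] an assms by simp
qed

lemma Y_char:
  assumes "a \<le> n - 1" "x < n" "0 < n"
  shows "x < a \<longleftrightarrow> (\<exists>y<n. (x,y) \<in> Y_digraph a n \<and> (y,x) \<notin> Y_digraph a n)"
proof
  assume x: "x < a"
  show "\<exists>y<n. (x,y) \<in> Y_digraph a n \<and> (y,x) \<notin> Y_digraph a n"
    using x assms by (intro exI[of _ "n - 1"]) (auto simp: Y_mem)
next
  assume "\<exists>y<n. (x,y) \<in> Y_digraph a n \<and> (y,x) \<notin> Y_digraph a n"
  then obtain y where "y < n" "(x,y) \<in> Y_digraph a n" "(y,x) \<notin> Y_digraph a n" by blast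
  thus "x < a" using assms by (auto simp: Y_mem)
qed

lemma notiso_YY:
  assumes "1 \<le> a" "a \<le> n - 1" "1 \<le> b" "b \<le> n - 1" "a \<noteq> b"
  shows "\<not> digraph_iso n (Y_digraph a n) (Y_digraph b n)"
proof
  assume "digraph_iso n (Y_digraph a n) (Y_digraph b n)"
  then obtain f where fb: "bij_betw f {0..<n} {0..<n}"
    and fe: "\<And>u w. u<n \<Longrightarrow> w<n \<Longrightarrow> (u,w) \<in> Y_digraph a n \<longleftrightarrow> (f u, f w) \<in> Y_digraph b n"
    unfolding digraph_iso_def by auto
  have n0: "0 < n" using assms by auto
  have fn: "f u < n" if "u < n" for u using fb that by (auto simp: bij_betw_def)
  have fs: "\<exists>u<n. z = f u" if "z < n" for z
  proof -
    have "z \<in> f ` {0..<n}" using fb that by (simp add: bij_betw_def)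
    then show ?thesis by auto
  qed
  have key: "u < a \<longleftrightarrow> f u < b" if u: "u < n" for u
  proof -
    have "u < a \<longleftrightarrow> (\<exists>y<n. (u,y) \<in> Y_digraph a n \<and> (y,u) \<notin> Y_digraph a n)"
      using Y_char assms u n0 by blast
    also have "\<dots> \<longleftrightarrow> (\<exists>y<n. (f u, f y) \<in> Y_digraph b n \<and> (f y, f u) \<notin> Y_digraph b n)"
      using fe u by blast
    also have "\<dots> \<longleftrightarrow> (\<exists>z<n. (f u, z) \<in> Y_digraph b n \<and> (z, f u) \<notin> Y_digraph b n)"
      using fs fn by blast
    also have "\<dots> \<longleftrightarrow> f u < b" using Y_char[of b n "f u"] assms fn u n0 by blast
    finally show ?thesis .
  qed
  have "f ` {0..<a} = {0..<b}"
  proof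
    show "f ` {0..<a} \<subseteq> {0..<b}"
    proof (rule image_subsetI)
      fix x assume "x \<in> {0..<a}"
      hence "x < n" "x < a" using assms by auto
      thus "f x \<in> {0..<b}" using key by auto
    qed
    show "{0..<b} \<subseteq> f ` {0..<a}"
    proof
      fix z assume z: "z \<in> {0..<b}"
      hence "z < n" using assms by auto
      then obtain u where "u < n" "z = f u" using fs by blast
      thus "z \<in> f ` {0..<a}" using key z by auto
    qed
  qed
  moreover have "inj_on f {0..<a}"
    using fb assms by (auto simp: bij_betw_def intro: inj_on_subset)
  ultimately have "card {0..<b} = card {0..<a}" by (metis card_image)
  thus False using assms by simp
qed



lemma forward:
  assumes dg: "is_digraph n E" and n1: "1 \<le> n"
    and sp: "H_spectrum n E = H_spectrum n (complete_digraph n)"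
  shows "\<exists>a. a \<le> n - 1 \<and> digraph_iso n E (Y_digraph a n)"
proof -
  let ?H = "herm_adj n E" and ?K = "herm_adj n (complete_digraph n)"
  have nzH: "char_poly ?H \<noteq> 0" using degree_monic_char_poly[OF ha_carrier, of n E] by auto
  have nzK: "char_poly ?K \<noteq> 0" using degree_monic_char_poly[OF ha_carrier, of n "complete_digraph n"] by auto
  have rootH: "\<mu> = of_nat n - 1 \<or> \<mu> = -1" if "poly (char_poly ?H) \<mu> = 0" for \<mu>
  proof -
    have "\<mu> \<in> set_mset (proots (char_poly ?H))" using that nzH by simp
    hence "\<mu> \<in> set_mset (proots (char_poly ?K))" using sp unfolding H_spectrum_def by simp
    hence "poly (char_poly ?K) \<mu> = 0" using nzK by simp
    thus ?thesis by (rule K_roots)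
  qed
  have irr: "(u,u) \<notin> E" for u using dg by (simp add: is_digraph_def)
  define G where "G = ?H + 1\<^sub>m n"
  have Gc: "G \<in> carrier_mat n n" by (simp add: G_def)
  have Gidx: "G $$ (i,j) = ?H $$ (i,j) + (if i = j then 1 else 0)" if "i<n" "j<n" for i j
    using that by (simp add: G_def)
  have Gh: "G $$ (j,i) = cnj (G $$ (i,j))" if "i<n" "j<n" for i j
    using that by (auto simp: Gidx ha_idx)
  have Groots: "\<mu> = 0 \<or> \<mu> = of_nat n" if "poly (char_poly G) \<mu> = 0" for \<mu>
  proof -
    have "poly (char_poly ?H) (\<mu> - 1) = 0" using shift_root that by (simp add: G_def)
    from rootH[OF this] show ?thesis by (auto simp: algebra_simps)
  qed
  have GG: "G * G = of_nat n \<cdot>\<^sub>m G"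
    by (rule herm_quad[OF Gc Gh _ Groots]) simp_all
  define g where "g i j = G $$ (i,j)" for i j
  have vals: "g i j \<in> {0,1,\<i>,-\<i>}" if "i<n" "j<n" for i j
    using that irr by (auto simp: g_def Gidx ha_idx)
  have gh: "g j i = cnj (g i j)" if "i<n" "j<n" for i j unfolding g_def by (rule Gh[OF that])
  have sq: "(\<Sum>j\<in>{0..<n}. g i j * g j k) = of_nat n * g i k" if "i<n" "k<n" for i k
  proof -
    have "(\<Sum>j\<in>{0..<n}. g i j * g j k) = (G * G) $$ (i,k)"
      using that Gc by (auto simp: g_def scalar_prod_def intro!: sum.cong)
    also have "\<dots> = of_nat n * g i k" using GG that Gc by (simp add: g_def)
    finally show ?thesis .
  qed
  have gd: "g i i = 1" if "i<n" for i using that irr by (simp add: g_def Gidx ha_idx)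
  have md: "cmod (g i j) = 1" if "i<n" "j<n" for i j
    using vals gh sq gd that by (rule struct1_mod[of n g])
  have fac: "g i j = g i 0 * g 0 j" if "i<n" "j<n" for i j
    using vals gh sq gd that by (rule struct1_fac[of n g])
  define v where "v u = g u 0" for u
  have n0: "0 < n" using n1 by simp
  have gv: "g u w = v u * cnj (v w)" if "u<n" "w<n" for u w
    using fac[OF that] gh[of w 0] that n0 by (simp add: v_def)
  have vvals: "v u \<in> {1,\<i>,-\<i>}" if "u<n" for u
    using vals[of u 0] md[of u 0] that n0 by (auto simp: v_def)
  have noclash: False if "u<n" "w<n" "v u = \<i>" "v w = -\<i>" for u w
    using vals[of u w] gv[of u w] that by (auto simp: complex_eq_iff)
  have edge: "(u,w) \<in> E \<longleftrightarrow> g u w = 1 \<or> g u w = \<i>" if "u<n" "w<n" "u \<noteq> w" for u w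
    using that by (auto simp: g_def Gidx ha_idx complex_eq_iff)
  have v0: "v 0 = 1" using gd[OF n0] by (simp add: v_def)
  show ?thesis
  proof (cases "\<exists>u<n. v u = -\<i>")
    case False
    define A where "A = {u. u < n \<and> v u = \<i>}"
    have A: "A \<subseteq> {0..<n}" by (auto simp: A_def complex_eq_iff)
    have vv: "v u = 1 \<or> v u = \<i>" if "u<n" for u using vvals[OF that] False that by auto
    have ch: "(u,w) \<in> E \<longleftrightarrow> \<not>(u \<notin> A \<and> w \<in> A)" if "u<n" "w<n" "u \<noteq> w" for u w
      using edge[OF that] gv[of u w] vv[of u] vv[of w] that by (auto simp: A_def complex_eq_iff)
    have "A \<subseteq> {0..<n} - {0}" using v0 by (auto simp: A_def complex_eq_iff)
    hence "card A \<le> n - 1" using card_mono[of "{0..<n} - {0}" A] n0 by simp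
    thus ?thesis using iso_from_set[OF dg A ch] by blast
  next
    case True
    then obtain u0 where u0: "u0 < n" "v u0 = -\<i>" by blast
    define A where "A = {u. u < n \<and> v u = 1}"
    have A: "A \<subseteq> {0..<n}" by (auto simp: A_def complex_eq_iff)
    have vv: "v u = 1 \<or> v u = -\<i>" if "u<n" for u using vvals[OF that] noclash[of u u0] u0 that by auto
    have ch: "(u,w) \<in> E \<longleftrightarrow> \<not>(u \<notin> A \<and> w \<in> A)" if "u<n" "w<n" "u \<noteq> w" for u w
      using edge[OF that] gv[of u w] vv[of u] vv[of w] that by (auto simp: A_def complex_eq_iff)
    have "A \<subseteq> {0..<n} - {u0}" using u0 by (auto simp: A_def complex_eq_iff)
    hence "card A \<le> n - 1" using card_mono[of "{0..<n} - {u0}" A] u0 by simp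
    thus ?thesis using iso_from_set[OF dg A ch] by blast
  qed
qed

theorem proposition8p6:
  fixes n :: nat
  assumes "n \<ge> 1"
  shows "(\<forall>m E. is_digraph m E \<longrightarrow>
            (H_spectrum m E = H_spectrum n (complete_digraph n) \<longleftrightarrow>
              m = n \<and> (digraph_iso n E (complete_digraph n) \<or>
                        (\<exists>a. 1 \<le> a \<and> a \<le> n - 1 \<and> digraph_iso n E (Y_digraph a n)))))
         \<and> (\<forall>a. 1 \<le> a \<and> a \<le> n - 1 \<longrightarrow> \<not> digraph_iso n (Y_digraph a n) (complete_digraph n))
         \<and> (\<forall>a b. 1 \<le> a \<and> a \<le> n - 1 \<and> 1 \<le> b \<and> b \<le> n - 1 \<and> a \<noteq> b \<longrightarrow>
                  \<not> digraph_iso n (Y_digraph a n) (Y_digraph b n))"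
proof (intro conjI allI impI)
  fix m E assume dg: "is_digraph m E"
  show "H_spectrum m E = H_spectrum n (complete_digraph n) \<longleftrightarrow>
              m = n \<and> (digraph_iso n E (complete_digraph n) \<or>
                        (\<exists>a. 1 \<le> a \<and> a \<le> n - 1 \<and> digraph_iso n E (Y_digraph a n)))"
  proof
    assume sp: "H_spectrum m E = H_spectrum n (complete_digraph n)"
    have "m = n"
      using arg_cong[OF sp, of size] size_spec[OF ha_carrier, of m E]
        size_spec[OF ha_carrier, of n "complete_digraph n"] unfolding H_spectrum_def by simp
    with dg sp have dg': "is_digraph n E" and sp': "H_spectrum n E = H_spectrum n (complete_digraph n)"
      by auto
    obtain a where a: "a \<le> n - 1" "digraph_iso n E (Y_digraph a n)"
      using forward[OF dg' assms sp'] by blast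
    show "m = n \<and> (digraph_iso n E (complete_digraph n) \<or>
                        (\<exists>a. 1 \<le> a \<and> a \<le> n - 1 \<and> digraph_iso n E (Y_digraph a n)))"
    proof (cases "a = 0")
      case True thus ?thesis using a \<open>m = n\<close> by (simp add: Y0)
    next
      case False thus ?thesis using a \<open>m = n\<close> by auto
    qed
  next
    assume h: "m = n \<and> (digraph_iso n E (complete_digraph n) \<or>
                        (\<exists>a. 1 \<le> a \<and> a \<le> n - 1 \<and> digraph_iso n E (Y_digraph a n)))"
    hence mn: "m = n" by simp
    with dg have dg': "is_digraph n E" by simp
    from h obtain a where "digraph_iso n E (Y_digraph a n)"
      using Y0[of n] by metis
    thus "H_spectrum m E = H_spectrum n (complete_digraph n)"
      using spec_of_iso[OF dg'] mn by simp
  qed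
next
  fix a assume "1 \<le> a \<and> a \<le> n - 1"
  thus "\<not> digraph_iso n (Y_digraph a n) (complete_digraph n)" using notiso_YK by blast
next
  fix a b assume "1 \<le> a \<and> a \<le> n - 1 \<and> 1 \<le> b \<and> b \<le> n - 1 \<and> a \<noteq> b"
  thus "\<not> digraph_iso n (Y_digraph a n) (Y_digraph b n)" using notiso_YY by blast
qed


end
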